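(* Let $(v,b)$ satisfy (C1) or (C2). Then every NWBTS$(v;b)$ $(V,\mathcal F)$ is an optimal data placement, i.e. $P(\mathcal F,x)\le P(\mathcal F',x)$ for every TS$(v;b)$ $(V,\mathcal F')$ and every real $x\ge 1$.
   Context: A triple system TS$(v;b)$ is a pair $(V,\mathcal F)$ where $V$ is a set of $v\ge3$ points and $\mathcal F=(B_1,\dots,B_b)$ is a multiset of $b$ 3-subsets of $V$ (blocks); repeated blocks are allowed. $P(\mathcal F,x)=\sum_{j=0}^3 v_jx^j$, where $v_j$ is the number of ordered pairs $(i,i')$, $i\ne i'$, with $|B_i\cap B_{i'}|=j$. For distinct $x_1,\dots,x_j\in V$, $\lambda_{x_1,\dots,x_j}$ is the number of blocks (with multiplicity) containing $\{x_1,\dots,x_j\}$. $(V,\mathcal F)$ is $j$-balanced if $|\lambda_{x_1,\dots,x_j}-\lambda_{y_1,\dots,y_j}|\le 1$ for any two $j$-subsets. The associated pair $(\lambda,\varepsilon)$ of $(v,b)$: integers with $3b=\lambda\binom v2+\varepsilon$, $-v/2<\varepsilon<v/2$. (C1): $v\equiv 2\pmod 3$ and $b\in\{\lfloor \lambda v(v-1)/6\rfloor,\lceil \lambda v(v-1)/6\rceil\}$ for an integer $\lambda$ with $\lambda\equiv1,2\pmod 3$ if $v\equiv5\pmod6$ and $\lambda\equiv 2,4\pmod 6$ if $v\equiv2\pmod 6$. (C2): $v$ even and $\lambda v(v-1)/6-v/6<b<\lambda v(v-1)/6+v/6$ for an odd integer $\lambda$. In both cases $\lambda$ is the $\lambda$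 of the associated pair. Defect graph: if all $\lambda_{x,y}\in\{\lambda-1,\lambda,\lambda+1\}$, the defect graph is the graph on $V$ with edges $D_1=\{\{x,y\}:\lambda_{x,y}=\lambda+1\}$ (labelled $+1$) and $D_{-1}=\{\{x,y\}:\lambda_{x,y}=\lambda-1\}$ (labelled $-1$); isomorphisms preserve labels. $G_1$: triangle, two $+1$ edges, one $-1$ edge; $G_{-1}$: triangle, one $+1$, two $-1$; $G_2$: 4-cycle, three $+1$, one $-1$; $G_{-2}$: 4-cycle, one $+1$, three $-1$. For even $v$: $H^0_{v,\varepsilon}$: perfect matching with $(v+2\varepsilon)/4$ edges $+1$ and $(v-2\varepsilon)/4$ edges $-1$; $H^1_{v,\varepsilon}$: disjoint union of a $K_{1,3}$ with two $+1$ and one $-1$ edge and a matching of the other $v-4$ vertices with $(v-6+2\varepsilon)/4$ edges $+1$, $(v-2-2\varepsilon)/4$ edges $-1$; $H^2_{v,\varepsilon}$: disjoint union of a $K_{1,3}$ with one $+1$ and two $-1$ edges and a matching of the other $v-4$ vertices with $(v-2+2\varepsilon)/4$ edges $+1$, $(v-6-2\varepsilon)/4$ edges $-1$. Nearly 2-balanced: all $\lambda_{x,y}\in\{\lambda-1,\lambda,\lambda+1\}$ and the defect graph is isomorphic to $G_\varepsilon$ under (C1); under (C2) to $H^0_{v,\varepsilon}$ if $\varepsilon\equiv v/2 \pmod 2$, and to $H^1_{v,\varepsilon}$ or $H^2_{v,\varepsilon}$ otherwise. An NWBTS$(v;b)$ is a nearly 2-balanced, 3-balanced TS$(v;b)$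 with $(v,b)$ satisfying (C1) or (C2). *)

theory Defs
  imports Complex_Main
begin

text \<open>A triple system TS(v;b) on the point set V is a list F = [B_1,...,B_b] of
  3-subsets of V (repetition allowed); v = card V, b = length F.\<close>

definition TS :: "'a set \<Rightarrow> 'a set list \<Rightarrow> bool" where
  "TS V F \<longleftrightarrow> finite V \<and> card V \<ge> 3 \<and> (\<forall>B \<in> set F. B \<subseteq> V \<and> card B = 3)"

definition Ppoly :: "'a set list \<Rightarrow> real \<Rightarrow> real" where
  "Ppoly F x = (\<Sum>i<length F. \<Sum>j<length F. if i \<noteq> j then x ^ card (F ! i \<inter> F ! j) else 0)"

definition lam :: "'a set list \<Rightarrow> 'a set \<Rightarrow> nat" where
  "lam F S = length (filter (\<lambda>B. S \<subseteq> B) F)"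

definition balanced :: "nat \<Rightarrow> 'a set \<Rightarrow> 'a set list \<Rightarrow> bool" where
  "balanced j V F \<longleftrightarrow> (\<forall>S T. S \<subseteq> V \<longrightarrow> T \<subseteq> V \<longrightarrow> card S = j \<longrightarrow> card T = j \<longrightarrow>
      \<bar>int (lam F S) - int (lam F T)\<bar> \<le> 1)"

definition assoc_pair :: "nat \<Rightarrow> nat \<Rightarrow> int \<Rightarrow> int \<Rightarrow> bool" where
  "assoc_pair v b l e \<longleftrightarrow> 3 * int b = l * int (v choose 2) + e \<and>
      - real v / 2 < real_of_int e \<and> real_of_int e < real v / 2"

definition C1 :: "nat \<Rightarrow> nat \<Rightarrow> int \<Rightarrow> bool" where
  "C1 v b l \<longleftrightarrow> v mod 3 = 2 \<and>
     (int b = \<lfloor>real_of_int l * real v * (real v - 1) / 6\<rfloor> \<or>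
      int b = \<lceil>real_of_int l * real v * (real v - 1) / 6\<rceil>) \<and>
     (v mod 6 = 5 \<longrightarrow> l mod 3 \<in> {1, 2}) \<and>
     (v mod 6 = 2 \<longrightarrow> l mod 6 \<in> {2, 4})"

definition C2 :: "nat \<Rightarrow> nat \<Rightarrow> int \<Rightarrow> bool" where
  "C2 v b l \<longleftrightarrow> even v \<and> odd l \<and>
     real_of_int l * real v * (real v - 1) / 6 - real v / 6 < real b \<and>
     real b < real_of_int l * real v * (real v - 1) / 6 + real v / 6"

definition C1_pair :: "nat \<Rightarrow> nat \<Rightarrow> bool" where
  "C1_pair v b \<longleftrightarrow> (\<exists>l. C1 v b l)"

definition C2_pair :: "nat \<Rightarrow> nat \<Rightarrow> bool" where
  "C2_pair v b \<longleftrightarrow> (\<exists>l. C2 v b l)"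

definition defect_plus :: "'a set \<Rightarrow> 'a set list \<Rightarrow> int \<Rightarrow> 'a set set" where
  "defect_plus V F l = {{x, y} | x y. x \<in> V \<and> y \<in> V \<and> x \<noteq> y \<and> int (lam F {x, y}) = l + 1}"

definition defect_minus :: "'a set \<Rightarrow> 'a set list \<Rightarrow> int \<Rightarrow> 'a set set" where
  "defect_minus V F l = {{x, y} | x y. x \<in> V \<and> y \<in> V \<and> x \<noteq> y \<and> int (lam F {x, y}) = l - 1}"

text \<open>A labelled model graph is given by a vertex set W, a set Pl of +1 edges and a set Mi
  of -1 edges (on nat).  The defect graph (on V) is isomorphic to the model if there is an
  injection f of W into V mapping the labelled edge sets exactly onto the labelled defect
  edges; all other vertices of V are isolated in the defect graph.  For models with
  card W = card V this is an ordinary label-preserving isomorphism.\<close>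

definition iso_model :: "'a set \<Rightarrow> 'a set set \<Rightarrow> 'a set set \<Rightarrow>
    nat set \<Rightarrow> nat set set \<Rightarrow> nat set set \<Rightarrow> bool" where
  "iso_model V Dp Dm W Pl Mi \<longleftrightarrow> (\<exists>f. inj_on f W \<and> f ` W \<subseteq> V \<and>
      Dp = (\<lambda>e. f ` e) ` Pl \<and> Dm = (\<lambda>e. f ` e) ` Mi)"

text \<open>G_1, G_{-1} (triangles), G_2, G_{-2} (4-cycles).\<close>

definition G_iso :: "'a set \<Rightarrow> 'a set set \<Rightarrow> 'a set set \<Rightarrow> int \<Rightarrow> bool" where
  "G_iso V Dp Dm e \<longleftrightarrow>
     (e = 1 \<and> iso_model V Dp Dm {0,1,2} {{0,1},{1,2}} {{0,2}}) \<or>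
     (e = -1 \<and> iso_model V Dp Dm {0,1,2} {{0,1}} {{1,2},{0,2}}) \<or>
     (e = 2 \<and> iso_model V Dp Dm {0,1,2,3} {{0,1},{1,2},{2,3}} {{3,0}}) \<or>
     (e = -2 \<and> iso_model V Dp Dm {0,1,2,3} {{0,1}} {{1,2},{2,3},{3,0}})"

definition match_plus :: "nat \<Rightarrow> nat \<Rightarrow> nat set set" where
  "match_plus s p = {{s + 2*i, s + 2*i + 1} | i. i < p}"

definition match_minus :: "nat \<Rightarrow> nat \<Rightarrow> nat \<Rightarrow> nat set set" where
  "match_minus s p m = {{s + 2*i, s + 2*i + 1} | i. p \<le> i \<and> i < p + m}"

text \<open>H^0_{v,e}: perfect matching on v vertices, (v+2e)/4 edges +1, (v-2e)/4 edges -1.\<close>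

definition H0_iso :: "'a set \<Rightarrow> 'a set set \<Rightarrow> 'a set set \<Rightarrow> nat \<Rightarrow> int \<Rightarrow> bool" where
  "H0_iso V Dp Dm v e \<longleftrightarrow>
     (let p = (int v + 2*e) div 4; m = (int v - 2*e) div 4 in
      4 * p = int v + 2*e \<and> 4 * m = int v - 2*e \<and> p \<ge> 0 \<and> m \<ge> 0 \<and>
      iso_model V Dp Dm {0..<v} (match_plus 0 (nat p)) (match_minus 0 (nat p) (nat m)))"

text \<open>H^1_{v,e}: K_{1,3} (center 0, leaves 1,2,3) with two +1 edges and one -1 edge, plus
  a matching of the other v-4 vertices with (v-6+2e)/4 edges +1 and (v-2-2e)/4 edges -1.\<close>

definition H1_iso :: "'a set \<Rightarrow> 'a set set \<Rightarrow> 'a set set \<Rightarrow> nat \<Rightarrow> int \<Rightarrow> bool" where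
  "H1_iso V Dp Dm v e \<longleftrightarrow>
     (let p = (int v - 6 + 2*e) div 4; m = (int v - 2 - 2*e) div 4 in
      4 * p = int v - 6 + 2*e \<and> 4 * m = int v - 2 - 2*e \<and> p \<ge> 0 \<and> m \<ge> 0 \<and>
      iso_model V Dp Dm {0..<v}
        ({{0,1},{0,2}} \<union> match_plus 4 (nat p))
        ({{0,3}} \<union> match_minus 4 (nat p) (nat m)))"

text \<open>H^2_{v,e}: K_{1,3} with one +1 edge and two -1 edges, plus a matching of the other
  v-4 vertices with (v-2+2e)/4 edges +1 and (v-6-2e)/4 edges -1.\<close>

definition H2_iso :: "'a set \<Rightarrow> 'a set set \<Rightarrow> 'a set set \<Rightarrow> nat \<Rightarrow> int \<Rightarrow> bool" where
  "H2_iso V Dp Dm v e \<longleftrightarrow>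
     (let p = (int v - 2 + 2*e) div 4; m = (int v - 6 - 2*e) div 4 in
      4 * p = int v - 2 + 2*e \<and> 4 * m = int v - 6 - 2*e \<and> p \<ge> 0 \<and> m \<ge> 0 \<and>
      iso_model V Dp Dm {0..<v}
        ({{0,1}} \<union> match_plus 4 (nat p))
        ({{0,2},{0,3}} \<union> match_minus 4 (nat p) (nat m)))"

definition nearly_2_balanced :: "'a set \<Rightarrow> 'a set list \<Rightarrow> bool" where
  "nearly_2_balanced V F \<longleftrightarrow>
     (let v = card V; b = length F in
      \<exists>l e. assoc_pair v b l e \<and>
        (\<forall>x\<in>V. \<forall>y\<in>V. x \<noteq> y \<longrightarrow> int (lam F {x, y}) \<in> {l - 1, l, l + 1}) \<and>
        ((C1 v b l \<and> G_iso V (defect_plus V F l) (defect_minus V F l) e) \<or>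
         (C2 v b l \<and>
           (if e mod 2 = int (v div 2) mod 2
            then H0_iso V (defect_plus V F l) (defect_minus V F l) v e
            else H1_iso V (defect_plus V F l) (defect_minus V F l) v e \<or>
                 H2_iso V (defect_plus V F l) (defect_minus V F l) v e))))"

definition NWBTS :: "'a set \<Rightarrow> 'a set list \<Rightarrow> bool" where
  "NWBTS V F \<longleftrightarrow> TS V F \<and> (C1_pair (card V) (length F) \<or> C2_pair (card V) (length F)) \<and>
     nearly_2_balanced V F \<and> balanced 3 V F"

end

theory Submission
  imports Defs
begin


definition ksub :: "'a set \<Rightarrow> nat \<Rightarrow> 'a set set" where
  "ksub V k = {S. S \<subseteq> V \<and> card S = k}"

lemma finite_ksub: "finite V \<Longrightarrow> finite (ksub V k)"
  unfolding ksub_def by (rule finite_subset[of _ "Pow V"]) auto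

lemma card_filter_sum: "finite A \<Longrightarrow> card {x\<in>A. P x} = (\<Sum>x\<in>A. if P x then 1 else 0)"
  using sum.inter_filter[of A "\<lambda>_. 1::nat" P] by simp

lemma lam_sum: "lam F S = (\<Sum>i<length F. if S \<subseteq> F!i then 1 else 0)"
proof -
  have "{i. i < length F \<and> S \<subseteq> F!i} = {i\<in>{..<length F}. S \<subseteq> F!i}" by auto
  then show ?thesis unfolding lam_def length_filter_conv_card using card_filter_sum[of "{..<length F}"] by simp
qed

lemma TS_block: "TS V F \<Longrightarrow> i < length F \<Longrightarrow> F!i \<subseteq> V \<and> card (F!i) = 3 \<and> finite (F!i)"
proof -
  assume "TS V F" "i < length F"
  then have "F!i \<in> set F" by simp
  then have "F!i \<subseteq> V \<and> card (F!i) = 3" using \<open>TS V F\<close> unfolding TS_def by blast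
  then show ?thesis using card.infinite by fastforce
qed

lemma lam_sumS:
  assumes "TS V F"
  shows "(\<Sum>S\<in>ksub V k. lam F S) = length F * (3 choose k)"
proof -
  have fin: "finite V" using assms TS_def by auto
  have "(\<Sum>S\<in>ksub V k. lam F S) = (\<Sum>S\<in>ksub V k. \<Sum>i<length F. if S \<subseteq> F!i then 1 else 0)"
    by (simp add: lam_sum)
  also have "\<dots> = (\<Sum>i<length F. \<Sum>S\<in>ksub V k. if S \<subseteq> F!i then 1 else 0)"
    by (rule sum.swap)
  also have "\<dots> = (\<Sum>i<length F. card {S\<in>ksub V k. S \<subseteq> F!i})"
    by (intro sum.cong refl) (simp add: card_filter_sum[OF finite_ksub[OF fin]])
  also have "\<dots> = (\<Sum>i<length F. 3 choose k)"
  proof (rule sum.cong)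
    fix i assume "i \<in> {..<length F}"
    then have b: "F!i \<subseteq> V" "card (F!i) = 3" "finite (F!i)" using TS_block assms by auto
    have "{S\<in>ksub V k. S \<subseteq> F!i} = {S. S \<subseteq> F!i \<and> card S = k}"
      using b unfolding ksub_def by auto
    then show "card {S\<in>ksub V k. S \<subseteq> F!i} = 3 choose k" using b n_subsets by metis
  qed simp
  finally show ?thesis by simp
qed

lemma lam_sq:
  assumes "TS V F"
  shows "(\<Sum>i<length F. \<Sum>j<length F. card (F!i \<inter> F!j) choose k) = (\<Sum>S\<in>ksub V k. (lam F S)^2)"
proof -
  have fin: "finite V" using assms TS_def by auto
  have "(\<Sum>S\<in>ksub V k. (lam F S)^2) = (\<Sum>S\<in>ksub V k. \<Sum>i<length F. \<Sum>j<length F.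
          (if S \<subseteq> F!i \<inter> F!j then 1 else 0))"
  proof (rule sum.cong[OF refl])
    fix S
    show "(lam F S)^2 = (\<Sum>i<length F. \<Sum>j<length F. (if S \<subseteq> F!i \<inter> F!j then 1 else 0))"
      unfolding power2_eq_square lam_sum sum_product by (intro sum.cong refl) auto
  qed
  also have "\<dots> = (\<Sum>i<length F. \<Sum>S\<in>ksub V k. \<Sum>j<length F. (if S \<subseteq> F!i \<inter> F!j then 1 else 0))"
    by (rule sum.swap)
  also have "\<dots> = (\<Sum>i<length F. \<Sum>j<length F. \<Sum>S\<in>ksub V k. (if S \<subseteq> F!i \<inter> F!j then 1 else 0))"
    by (simp add: sum.swap[of _ "ksub V k"])
  also have "\<dots> = (\<Sum>i<length F. \<Sum>j<length F. card (F!i \<inter> F!j) choose k)"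
  proof (intro sum.cong refl)
    fix i j assume "i \<in> {..<length F}" "j \<in> {..<length F}"
    then have b: "F!i \<subseteq> V" "finite (F!i)" using TS_block assms by auto
    have "{S\<in>ksub V k. S \<subseteq> F!i \<inter> F!j} = {S. S \<subseteq> F!i \<inter> F!j \<and> card S = k}"
      using b unfolding ksub_def by auto
    moreover have "finite (F!i \<inter> F!j)" using b by auto
    ultimately have "card {S\<in>ksub V k. S \<subseteq> F!i \<inter> F!j} = card (F!i \<inter> F!j) choose k"
      using n_subsets by metis
    then show "(\<Sum>S\<in>ksub V k. (if S \<subseteq> F!i \<inter> F!j then 1 else 0)) = card (F!i \<inter> F!j) choose k"
      by (simp add: card_filter_sum[OF finite_ksub[OF fin]])
  qed
  finally show ?thesis by simp
qed



lemma pow_expand: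
  fixes x :: real assumes "c \<le> 3"
  shows "x ^ c = (\<Sum>k\<le>3. real (c choose k) * (x - 1) ^ k)"
proof -
  have "x ^ c = ((x - 1) + 1) ^ c" by simp
  also have "\<dots> = (\<Sum>k\<le>c. real (c choose k) * (x - 1) ^ k)"
    unfolding binomial_ring by simp
  also have "\<dots> = (\<Sum>k\<le>3. real (c choose k) * (x - 1) ^ k)"
    using assms by (intro sum.mono_neutral_left) auto
  finally show ?thesis .
qed

definition Qp :: "'a set list \<Rightarrow> real \<Rightarrow> real" where
  "Qp F x = (\<Sum>i<length F. \<Sum>j<length F. x ^ card (F!i \<inter> F!j))"

lemma Qp_expand:
  assumes "TS V F"
  shows "Qp F x = (\<Sum>k\<le>3. (x - 1) ^ k * real (\<Sum>S\<in>ksub V k. (lam F S)^2))"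
proof -
  have c3: "card (F!i \<inter> F!j) \<le> 3" if "i < length F" for i j
    using TS_block[OF assms that] by (metis Int_lower1 card_mono)
  have "Qp F x = (\<Sum>i<length F. \<Sum>j<length F. \<Sum>k\<le>3. real (card (F!i \<inter> F!j) choose k) * (x - 1) ^ k)"
    unfolding Qp_def using c3 pow_expand by (intro sum.cong refl) auto
  also have "\<dots> = (\<Sum>k\<le>3. \<Sum>i<length F. \<Sum>j<length F. real (card (F!i \<inter> F!j) choose k) * (x - 1) ^ k)"
    by (simp add: sum.swap[of _ "{..3::nat}"])
  also have "\<dots> = (\<Sum>k\<le>3. (x - 1) ^ k * real (\<Sum>i<length F. \<Sum>j<length F. card (F!i \<inter> F!j) choose k))"
    by (simp add: sum_distrib_left sum_distrib_right mult.commute)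
  also have "\<dots> = (\<Sum>k\<le>3. (x - 1) ^ k * real (\<Sum>S\<in>ksub V k. (lam F S)^2))"
    using lam_sq[OF assms] by simp
  finally show ?thesis .
qed

lemma Ppoly_Qp:
  assumes "TS V F"
  shows "Ppoly F x = Qp F x - real (length F) * x ^ 3"
proof -
  have "Ppoly F x = (\<Sum>i<length F. (\<Sum>j<length F. x ^ card (F!i \<inter> F!j)) - x ^ 3)"
    unfolding Ppoly_def
  proof (rule sum.cong[OF refl])
    fix i assume i: "i \<in> {..<length F}"
    have "(\<Sum>j<length F. if i \<noteq> j then x ^ card (F!i \<inter> F!j) else 0)
        = (\<Sum>j\<in>{..<length F} - {i}. x ^ card (F!i \<inter> F!j))"
      by (simp add: sum.If_cases Diff_eq) (rule sum.cong; auto)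
    also have "\<dots> = (\<Sum>j<length F. x ^ card (F!i \<inter> F!j)) - x ^ card (F!i \<inter> F!i)"
      using i by (simp add: sum_diff1)
    also have "card (F!i \<inter> F!i) = 3" using TS_block[OF assms] i by simp
    finally show "(\<Sum>j<length F. if i \<noteq> j then x ^ card (F!i \<inter> F!j) else 0)
        = (\<Sum>j<length F. x ^ card (F!i \<inter> F!j)) - x ^ 3" .
  qed
  also have "\<dots> = Qp F x - real (length F) * x ^ 3"
    unfolding Qp_def by (simp add: sum_subtractf)
  finally show ?thesis .
qed

lemma minsq:
  fixes f g :: "'b \<Rightarrow> int"
  assumes "finite I" "sum f I = sum g I" "\<forall>i\<in>I. f i = c \<or> f i = c + 1"
  shows "(\<Sum>i\<in>I. (f i)^2) \<le> (\<Sum>i\<in>I. (g i)^2)"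
proof -
  have eq: "\<And>t::int. t^2 = (t - c) * (t - c - 1) + (2*c+1) * t - (c^2 + c)"
    by (simp add: power2_eq_square algebra_simps)
  have nn: "\<And>t::int. 0 \<le> (t - c) * (t - c - 1)"
    by (smt (verit) mult_nonneg_nonneg mult_nonpos_nonpos)
  have sf: "(\<Sum>i\<in>I. (f i)^2) = (\<Sum>i\<in>I. (f i - c) * (f i - c - 1)) + (2*c+1) * sum f I - card I * (c^2 + c)"
    by (subst eq) (simp add: sum.distrib sum_subtractf sum_distrib_left)
  have sg: "(\<Sum>i\<in>I. (g i)^2) = (\<Sum>i\<in>I. (g i - c) * (g i - c - 1)) + (2*c+1) * sum g I - card I * (c^2 + c)"
    by (subst eq) (simp add: sum.distrib sum_subtractf sum_distrib_left)
  have z: "(\<Sum>i\<in>I. (f i - c) * (f i - c - 1)) = 0"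
    using assms(3) by (intro sum.neutral) auto
  have "0 \<le> (\<Sum>i\<in>I. (g i - c) * (g i - c - 1))" using nn by (simp add: sum_nonneg)
  moreover have "(2*c+1) * sum f I = (2*c+1) * sum g I" using assms(2) by simp
  ultimately show ?thesis using sf sg z by linarith
qed

lemma bal_c:
  fixes f :: "'b \<Rightarrow> int"
  assumes "finite I" "\<forall>i\<in>I. \<forall>j\<in>I. \<bar>f i - f j\<bar> \<le> 1"
  shows "\<exists>c. \<forall>i\<in>I. f i = c \<or> f i = c + 1"
proof (cases "I = {}")
  case True then show ?thesis by auto
next
  case False
  define c where "c = Min (f ` I)"
  have "c \<in> f ` I" unfolding c_def using assms(1) False by simp
  then obtain i0 where i0: "i0 \<in> I" "f i0 = c" by auto
  have "\<forall>i\<in>I. c \<le> f i" unfolding c_def using assms(1) by simp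
  have "\<forall>i\<in>I. f i = c \<or> f i = c + 1"
  proof
    fix i assume i: "i \<in> I"
    have "c \<le> f i" using i \<open>\<forall>i\<in>I. c \<le> f i\<close> by blast
    moreover have "\<bar>f i - f i0\<bar> \<le> 1" using assms(2) i i0(1) by blast
    ultimately show "f i = c \<or> f i = c + 1" using i0(2) by linarith
  qed
  then show ?thesis by blast
qed



lemma pairs_through:
  assumes "finite A" "p \<in> A"
  shows "{S. S \<subseteq> A \<and> card S = 2 \<and> p \<in> S} = (\<lambda>y. {p,y}) ` (A - {p})"
proof
  show "{S. S \<subseteq> A \<and> card S = 2 \<and> p \<in> S} \<subseteq> (\<lambda>y. {p,y}) ` (A - {p})"
  proof
    fix S assume "S \<in> {S. S \<subseteq> A \<and> card S = 2 \<and> p \<in> S}"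
    then have S: "S \<subseteq> A" "card S = 2" "p \<in> S" by auto
    then obtain a b where ab: "S = {a,b}" "a \<noteq> b" by (meson card_2_iff)
    show "S \<in> (\<lambda>y. {p,y}) ` (A - {p})"
    proof (cases "a = p")
      case True then show ?thesis using ab S by (auto intro!: image_eqI[of _ _ b])
    next
      case False then have "b = p" using ab S by auto
      then show ?thesis using ab S False by (auto intro!: image_eqI[of _ _ a])
    qed
  qed
next
  show "(\<lambda>y. {p,y}) ` (A - {p}) \<subseteq> {S. S \<subseteq> A \<and> card S = 2 \<and> p \<in> S}"
    using assms by auto
qed

lemma card_pairs_through:
  assumes "finite A" "p \<in> A"
  shows "card {S. S \<subseteq> A \<and> card S = 2 \<and> p \<in> S} = card A - 1"
proof -
  have "inj_on (\<lambda>y. {p,y}) (A - {p})" by (auto simp: inj_on_def doubleton_eq_iff)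
  then have "card ((\<lambda>y. {p,y}) ` (A - {p})) = card (A - {p})" by (rule card_image)
  then show ?thesis using pairs_through[OF assms] assms by simp
qed

lemma card_Lp:
  assumes "finite V" "p \<in> V"
  shows "card {S\<in>ksub V 2. p \<in> S} = card V - 1"
proof -
  have "{S\<in>ksub V 2. p \<in> S} = {S. S \<subseteq> V \<and> card S = 2 \<and> p \<in> S}" unfolding ksub_def by auto
  then show ?thesis using card_pairs_through[OF assms] by simp
qed

lemma card_ksub: "finite V \<Longrightarrow> card (ksub V k) = card V choose k"
  unfolding ksub_def by (rule n_subsets)

lemma vertex_id:
  assumes "TS V F" "p \<in> V"
  shows "(\<Sum>S\<in>{S\<in>ksub V 2. p \<in> S}. lam F S) = 2 * lam F {p}"
proof -
  have fin: "finite V" using assms TS_def by auto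
  let ?Lp = "{S\<in>ksub V 2. p \<in> S}"
  have finLp: "finite ?Lp" using finite_ksub[OF fin] by simp
  have "(\<Sum>S\<in>?Lp. lam F S) = (\<Sum>S\<in>?Lp. \<Sum>i<length F. if S \<subseteq> F!i then 1::nat else 0)"
    by (simp add: lam_sum)
  also have "\<dots> = (\<Sum>i<length F. \<Sum>S\<in>?Lp. if S \<subseteq> F!i then 1::nat else 0)"
    by (rule sum.swap)
  also have "\<dots> = (\<Sum>i<length F. 2 * (if {p} \<subseteq> F!i then 1::nat else 0))"
  proof (rule sum.cong[OF refl])
    fix i assume "i \<in> {..<length F}"
    then have b: "F!i \<subseteq> V" "card (F!i) = 3" "finite (F!i)" using TS_block assms by auto
    have e: "{S\<in>?Lp. S \<subseteq> F!i} = {S. S \<subseteq> F!i \<and> card S = 2 \<and> p \<in> S}"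
      using b unfolding ksub_def by auto
    have "(\<Sum>S\<in>?Lp. if S \<subseteq> F!i then 1::nat else 0) = card {S\<in>?Lp. S \<subseteq> F!i}"
      using card_filter_sum[OF finLp] by simp
    also have "\<dots> = 2 * (if {p} \<subseteq> F!i then 1::nat else 0)"
    proof (cases "p \<in> F!i")
      case True then show ?thesis using e card_pairs_through[OF b(3) True] b(2) by simp
    next
      case False then have "{S\<in>?Lp. S \<subseteq> F!i} = {}" by auto
      then have z: "card {S\<in>?Lp. S \<subseteq> F!i} = 0" by (simp only: card.empty)
      then show ?thesis using False by simp
    qed
    finally show "(\<Sum>S\<in>?Lp. if S \<subseteq> F!i then 1::nat else 0) = 2 * (if {p} \<subseteq> F!i then 1::nat else 0)" .
  qed
  also have "\<dots> = 2 * lam F {p}" by (simp add: lam_sum sum_distrib_left)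
  finally show ?thesis .
qed

lemma sq_parity:
  fixes D :: "'b \<Rightarrow> int"
  assumes "finite A"
  shows "even ((\<Sum>S\<in>A. (D S)^2) - sum D A)"
proof -
  have "(\<Sum>S\<in>A. (D S)^2) - sum D A = (\<Sum>S\<in>A. (D S)^2 - D S)" by (simp add: sum_subtractf)
  moreover have "even (\<Sum>S\<in>A. (D S)^2 - D S)"
    by (rule dvd_sum) (simp add: power2_eq_square)
  ultimately show ?thesis by simp
qed

lemma N_le:
  fixes D :: "'b \<Rightarrow> int"
  assumes "finite A"
  shows "int (card {S\<in>A. D S \<noteq> 0}) \<le> (\<Sum>S\<in>A. (D S)^2)"
proof -
  have "int (card {S\<in>A. D S \<noteq> 0}) = (\<Sum>S\<in>A. if D S \<noteq> 0 then 1 else 0)"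
    using card_filter_sum[OF assms, of "\<lambda>S. D S \<noteq> 0"] by (simp add: of_nat_sum) (rule sum.cong; simp)
  also have "\<dots> \<le> (\<Sum>S\<in>A. (D S)^2)"
  proof (rule sum_mono)
    fix S show "(if D S \<noteq> 0 then 1 else 0) \<le> (D S)^2"
    proof (cases "D S = 0")
      case False
      then have "0 < (D S)^2" by simp
      then have "1 \<le> (D S)^2" by linarith
      then show ?thesis using False by simp
    qed simp
  qed
  finally show ?thesis .
qed



lemma LB_odd:
  fixes D :: "'a set \<Rightarrow> int"
  assumes fin: "finite V"
    and odd: "\<forall>p\<in>V. odd (\<Sum>S\<in>{S\<in>ksub V 2. p \<in> S}. D S)"
  shows "int (card V) \<le> 2 * (\<Sum>S\<in>ksub V 2. (D S)^2)"
proof -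
  let ?N = "{S\<in>ksub V 2. D S \<noteq> 0}"
  have finN: "finite ?N" using finite_ksub[OF fin] by simp
  have cover: "V \<subseteq> \<Union>?N"
  proof
    fix p assume p: "p \<in> V"
    show "p \<in> \<Union>?N"
    proof (rule ccontr)
      assume "p \<notin> \<Union>?N"
      then have "\<forall>S\<in>{S\<in>ksub V 2. p \<in> S}. D S = 0" by auto
      then have "(\<Sum>S\<in>{S\<in>ksub V 2. p \<in> S}. D S) = 0" by simp
      then show False using odd p by fastforce
    qed
  qed
  have "card V \<le> card (\<Union>?N)"
    using cover finN by (intro card_mono; auto simp: ksub_def intro: finite_subset[OF _ fin])
  also have "\<dots> \<le> sum card ?N"
    using finN by (intro card_Union_le_sum_card; auto simp: ksub_def intro: finite_subset[OF _ fin])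
  also have "\<dots> = 2 * card ?N" by (simp add: ksub_def)
  finally have "int (card V) \<le> 2 * int (card ?N)" by linarith
  also have "\<dots> \<le> 2 * (\<Sum>S\<in>ksub V 2. (D S)^2)"
    using N_le[OF finite_ksub[OF fin, of 2], where D=D] by linarith
  finally show ?thesis .
qed

lemma LB_even:
  fixes D :: "'a set \<Rightarrow> int"
  assumes fin: "finite V"
    and ev: "\<forall>p\<in>V. even (\<Sum>S\<in>{S\<in>ksub V 2. p \<in> S}. D S)"
    and nz: "sum D (ksub V 2) \<noteq> 0"
  shows "3 \<le> (\<Sum>S\<in>ksub V 2. (D S)^2)"
proof (rule ccontr)
  assume "\<not> 3 \<le> (\<Sum>S\<in>ksub V 2. (D S)^2)"
  then have Q: "(\<Sum>S\<in>ksub V 2. (D S)^2) \<le> 2" by simp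
  let ?L = "ksub V 2"
  let ?N = "{S\<in>?L. D S \<noteq> 0}"
  have finL: "finite ?L" using finite_ksub[OF fin] .
  have cN: "card ?N \<le> 2" using N_le[OF finL, where D=D] Q by linarith
  have small: "D S = 1 \<or> D S = -1" if "S \<in> ?N" for S
  proof -
    have "(D S)^2 \<le> (\<Sum>S\<in>?L. (D S)^2)"
      using that finL by (intro member_le_sum) auto
    then have "(D S)^2 \<le> 2" using Q by linarith
    moreover have "D S \<noteq> 0" using that by simp
    moreover have "\<not> 2 \<le> \<bar>D S\<bar>"
    proof
      assume "2 \<le> \<bar>D S\<bar>"
      then have "\<bar>2::int\<bar> \<le> \<bar>D S\<bar>" by simp
      then have "(2::int)^2 \<le> (D S)^2" using abs_le_square_iff by blast
      then show False using \<open>(D S)^2 \<le> 2\<close> by simp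
    qed
    ultimately show ?thesis by linarith
  qed
  have Nne: "?N \<noteq> {}"
  proof
    assume "?N = {}"
    then have "\<forall>S\<in>?L. D S = 0" by auto
    then have "sum D ?L = 0" by simp
    then show False using nz by simp
  qed
  obtain S1 p where S1: "S1 \<in> ?N" "p \<in> S1" "\<forall>S\<in>?N. p \<in> S \<longrightarrow> S = S1"
  proof -
    have fN: "finite ?N" using finL by simp
    have "card ?N = 1 \<or> card ?N = 2" using cN Nne fN card_0_eq by fastforce
    then show ?thesis
    proof
      assume "card ?N = 1"
      then obtain S1 where e: "?N = {S1}" using card_1_singletonE by blast
      then have "S1 \<in> ?L" by auto
      then have "card S1 = 2" by (simp add: ksub_def)
      then have "S1 \<noteq> {}" by auto
      then obtain p where "p \<in> S1" by auto
      then show ?thesis using that e by auto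
    next
      assume "card ?N = 2"
      then obtain S1 S2 where e: "?N = {S1,S2}" "S1 \<noteq> S2" by (meson card_2_iff)
      then have "S1 \<in> ?L" "S2 \<in> ?L" by auto
      then have c: "card S1 = 2" "card S2 = 2" "finite S2" by (auto simp: ksub_def intro: card_ge_0_finite)
      have "\<not> S1 \<subseteq> S2"
      proof
        assume "S1 \<subseteq> S2" then have "S1 = S2" using c card_subset_eq[OF c(3)] by simp
        then show False using e by simp
      qed
      then obtain p where "p \<in> S1" "p \<notin> S2" by auto
      then show ?thesis using that e by auto
    qed
  qed
  have pV: "p \<in> V" using S1 by (auto simp: ksub_def)
  have "(\<Sum>S\<in>{S\<in>?L. p \<in> S}. D S) = (\<Sum>S\<in>{S1}. D S)"
  proof (rule sum.mono_neutral_right)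
    show "finite {S\<in>?L. p \<in> S}" using finL by simp
    show "{S1} \<subseteq> {S\<in>?L. p \<in> S}" using S1(1,2) by blast
    show "\<forall>S\<in>{S\<in>?L. p \<in> S} - {S1}. D S = 0"
    proof
      fix S assume "S \<in> {S\<in>?L. p \<in> S} - {S1}"
      then have "S \<in> ?L" "p \<in> S" "S \<noteq> S1" by auto
      then show "D S = 0" using S1(3) by blast
    qed
  qed
  also have "\<dots> = D S1" by simp
  finally have "odd (\<Sum>S\<in>{S\<in>?L. p \<in> S}. D S)" using small[OF S1(1)] by auto
  then show False using ev pV by blast
qed



lemma img_deg:
  assumes inj: "inj_on f W" and sub: "\<forall>E\<in>Pl. E \<subseteq> W" and fin: "finite Pl"
    and deg: "\<forall>w\<in>W. card {E\<in>Pl. w \<in> E} \<le> K"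
  shows "card {S\<in>(\<lambda>E. f ` E) ` Pl. p \<in> S} \<le> K"
proof -
  have eq: "{S\<in>(\<lambda>E. f ` E) ` Pl. p \<in> S} = (\<lambda>E. f ` E) ` {E\<in>Pl. p \<in> f ` E}" by auto
  have "card {S\<in>(\<lambda>E. f ` E) ` Pl. p \<in> S} \<le> card {E\<in>Pl. p \<in> f ` E}"
    unfolding eq by (rule card_image_le) (use fin in simp)
  also have "\<dots> \<le> K"
  proof (cases "\<exists>w\<in>W. f w = p")
    case True
    then obtain w where w: "w \<in> W" "f w = p" by blast
    have "{E\<in>Pl. p \<in> f ` E} \<subseteq> {E\<in>Pl. w \<in> E}"
    proof
      fix E assume E: "E \<in> {E\<in>Pl. p \<in> f ` E}"
      then obtain u where u: "u \<in> E" "f u = p" by auto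
      have "u \<in> W" using u(1) E sub by blast
      then have "u = w" using inj w u(2) by (simp add: inj_on_def)
      then show "E \<in> {E\<in>Pl. w \<in> E}" using E u by simp
    qed
    then have "card {E\<in>Pl. p \<in> f ` E} \<le> card {E\<in>Pl. w \<in> E}"
      using fin by (intro card_mono) auto
    then show ?thesis using deg w by (meson order.trans)
  next
    case False
    have "{E\<in>Pl. p \<in> f ` E} = {}"
    proof -
      have "\<And>E. E \<in> Pl \<Longrightarrow> p \<notin> f ` E"
      proof
        fix E assume "E \<in> Pl" "p \<in> f ` E"
        then obtain u where "u \<in> E" "f u = p" by auto
        then show False using False sub \<open>E \<in> Pl\<close> by blast
      qed
      then show ?thesis by blast
    qed
    then have "card {E\<in>Pl. p \<in> f ` E} = 0" by (simp only: card.empty)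
    then show ?thesis by simp
  qed
  finally show ?thesis .
qed

lemma iso_card:
  assumes "iso_model V Dp Dm W Pl Mi" "finite Pl" "finite Mi"
  shows "card Dp \<le> card Pl" "card Dm \<le> card Mi"
  using assms unfolding iso_model_def by (auto intro: card_image_le)

lemma iso_fin:
  assumes "iso_model V Dp Dm W Pl Mi" "finite Pl" "finite Mi"
  shows "finite Dp" "finite Dm"
  using assms unfolding iso_model_def by auto

lemma iso_deg:
  assumes "iso_model V Dp Dm W Pl Mi" "finite Pl" "finite Mi"
    and "\<forall>E\<in>Pl. E \<subseteq> W" "\<forall>E\<in>Mi. E \<subseteq> W"
    and "\<forall>w\<in>W. card {E\<in>Pl. w \<in> E} \<le> K" "\<forall>w\<in>W. card {E\<in>Mi. w \<in> E} \<le> K"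
  shows "card {S\<in>Dp. p \<in> S} \<le> K \<and> card {S\<in>Dm. p \<in> S} \<le> K"
proof -
  obtain f where f: "inj_on f W" "Dp = (\<lambda>e. f ` e) ` Pl" "Dm = (\<lambda>e. f ` e) ` Mi"
    using assms(1) unfolding iso_model_def by blast
  show ?thesis using img_deg[OF f(1) assms(4) assms(2) assms(6)] img_deg[OF f(1) assms(5) assms(3) assms(7)] f
    by simp
qed

lemma sub_single: "X \<subseteq> {a} \<Longrightarrow> card X \<le> 1"
proof -
  assume "X \<subseteq> {a}"
  then have "card X \<le> card {a}" by (intro card_mono) simp_all
  then show ?thesis by simp
qed

definition mt :: "nat \<Rightarrow> nat set \<Rightarrow> nat set set" where
  "mt s I = (\<lambda>i. {s + 2*i, s + 2*i + 1}) ` I"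

lemma match_plus_eq: "match_plus s p = mt s {..<p}"
  unfolding match_plus_def mt_def by auto

lemma match_minus_eq: "match_minus s p m = mt s {p..<p+m}"
  unfolding match_minus_def mt_def by auto

lemma mt_fin: "finite I \<Longrightarrow> finite (mt s I)" unfolding mt_def by simp

lemma mt_card: "finite I \<Longrightarrow> card (mt s I) \<le> card I" unfolding mt_def by (rule card_image_le)

lemma mt_deg: "card {E\<in>mt s I. w \<in> E} \<le> 1"
proof -
  let ?j = "(w - s) div 2"
  have "{E\<in>mt s I. w \<in> E} \<subseteq> {{s + 2*?j, s + 2*?j + 1}}"
  proof
    fix E assume "E \<in> {E\<in>mt s I. w \<in> E}"
    then obtain i where i: "E = {s + 2*i, s + 2*i + 1}" "w \<in> E" unfolding mt_def by auto
    then have "w = s + 2*i \<or> w = s + 2*i + 1" by auto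
    then have "?j = i" by auto
    then show "E \<in> {{s + 2*?j, s + 2*?j + 1}}" using i by simp
  qed
  then show ?thesis by (rule sub_single)
qed

lemma mt_sub: "\<forall>i\<in>I. s + 2*i + 1 < n \<Longrightarrow> \<forall>E\<in>mt s I. E \<subseteq> {0..<n}"
  unfolding mt_def by auto

lemma mt4_no0: "card {E\<in>mt 4 I. (0::nat) \<in> E} = 0"
proof -
  have "{E\<in>mt 4 I. (0::nat) \<in> E} = {}" unfolding mt_def by auto
  then show ?thesis by (simp only: card.empty)
qed

lemma star_deg:
  assumes "finite A" "card A \<le> 2" "\<forall>E\<in>A. \<exists>u. E = {0,u}"
  shows "card {E\<in>A \<union> mt 4 I. w \<in> E} \<le> 2"
proof -
  have un: "{E\<in>A \<union> mt 4 I. w \<in> E} = {E\<in>A. w \<in> E} \<union> {E\<in>mt 4 I. w \<in> E}" by auto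
  have "card {E\<in>A \<union> mt 4 I. w \<in> E} \<le> card {E\<in>A. w \<in> E} + card {E\<in>mt 4 I. w \<in> E}"
    unfolding un by (rule card_Un_le)
  moreover have "card {E\<in>A. w \<in> E} + card {E\<in>mt 4 I. w \<in> E} \<le> 2"
  proof (cases "w = 0")
    case True
    have "card {E\<in>A. w \<in> E} \<le> card A" using assms(1) by (intro card_mono) auto
    then show ?thesis using True mt4_no0[of I] assms(2) by simp
  next
    case False
    have "{E\<in>A. w \<in> E} \<subseteq> {{0,w}}" using assms(3) False by auto
    then have "card {E\<in>A. w \<in> E} \<le> 1"
      by (rule sub_single)
    then show ?thesis using mt_deg[of 4 I w] by simp
  qed
  ultimately show ?thesis by simp
qed



lemma card_ins_le: "finite A \<Longrightarrow> card (insert x A) \<le> Suc (card A)"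
  by (simp add: card_insert_if)

lemma G_bounds:
  assumes "G_iso V Dp Dm e"
  shows "finite Dp \<and> finite Dm \<and>
    ((e = 1 \<and> card Dp \<le> 2 \<and> card Dm \<le> 1) \<or> (e = -1 \<and> card Dp \<le> 1 \<and> card Dm \<le> 2) \<or>
     (e = 2 \<and> card Dp \<le> 3 \<and> card Dm \<le> 1) \<or> (e = -2 \<and> card Dp \<le> 1 \<and> card Dm \<le> 3))"
proof -
  have c2: "card {a, b} \<le> 2" for a b :: "nat set"
    using card_ins_le[of "{b}" a] by simp
  have c3: "card {a, b, c} \<le> 3" for a b c :: "nat set"
    using card_ins_le[of "{b,c}" a] c2[of b c] by simp
  from assms show ?thesis unfolding G_iso_def
  proof (elim disjE conjE)
    assume e: "e = 1" and i: "iso_model V Dp Dm {0,1,2} {{0,1},{1,2}} {{0,2}}"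
    have f: "finite ({{0,1},{1,2}}::nat set set)" "finite ({{0,2}}::nat set set)" by simp_all
    note a = iso_card[OF i f] iso_fin[OF i f]
    show ?thesis using a e c2[of "{0,1}" "{1,2}"] by simp
  next
    assume e: "e = -1" and i: "iso_model V Dp Dm {0,1,2} {{0,1}} {{1,2},{0,2}}"
    have f: "finite ({{0,1}}::nat set set)" "finite ({{1,2},{0,2}}::nat set set)" by simp_all
    note a = iso_card[OF i f] iso_fin[OF i f]
    show ?thesis using a e c2[of "{1,2}" "{0,2}"] by simp
  next
    assume e: "e = 2" and i: "iso_model V Dp Dm {0,1,2,3} {{0,1},{1,2},{2,3}} {{3,0}}"
    have f: "finite ({{0,1},{1,2},{2,3}}::nat set set)" "finite ({{3,0}}::nat set set)" by simp_all
    note a = iso_card[OF i f] iso_fin[OF i f]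
    show ?thesis using a e c3[of "{0,1}" "{1,2}" "{2,3}"] by simp
  next
    assume e: "e = -2" and i: "iso_model V Dp Dm {0,1,2,3} {{0,1}} {{1,2},{2,3},{3,0}}"
    have f: "finite ({{0,1}}::nat set set)" "finite ({{1,2},{2,3},{3,0}}::nat set set)" by simp_all
    note a = iso_card[OF i f] iso_fin[OF i f]
    show ?thesis using a e c3[of "{1,2}" "{2,3}" "{3,0}"] by simp
  qed
qed



lemma H0_b:
  assumes "H0_iso V Dp Dm v e"
  shows "finite Dp \<and> finite Dm \<and> (\<forall>q. card {S\<in>Dp. q \<in> S} \<le> 2 \<and> card {S\<in>Dm. q \<in> S} \<le> 2)
     \<and> 2 * (card Dp + card Dm) \<le> v"
proof -
  define p where "p = (int v + 2*e) div 4"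
  define m where "m = (int v - 2*e) div 4"
  have h: "4*p = int v + 2*e" "4*m = int v - 2*e" "p \<ge> 0" "m \<ge> 0"
    and i: "iso_model V Dp Dm {0..<v} (match_plus 0 (nat p)) (match_minus 0 (nat p) (nat m))"
    using assms unfolding H0_iso_def Let_def p_def m_def by auto
  define P where "P = nat p"
  define M where "M = nat m"
  have "int v = 2*(p+m)" using h by presburger
  then have "int v = int (2*(P+M))" unfolding P_def M_def using h(3,4) by simp
  then have vPM: "v = 2*(P+M)" by simp
  have i': "iso_model V Dp Dm {0..<v} (mt 0 {..<P}) (mt 0 {P..<P+M})"
    using i unfolding P_def M_def match_plus_eq match_minus_eq .
  have f: "finite (mt 0 {..<P})" "finite (mt 0 {P..<P+M})" by (simp_all add: mt_fin)
  have c: "card (mt 0 {..<P}) \<le> P" "card (mt 0 {P..<P+M}) \<le> M"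
    using mt_card[of "{..<P}" 0] mt_card[of "{P..<P+M}" 0] by simp_all
  have sa: "\<forall>E\<in>mt 0 {..<P}. E \<subseteq> {0..<v}" by (rule mt_sub) (use vPM in auto)
  have sb: "\<forall>E\<in>mt 0 {P..<P+M}. E \<subseteq> {0..<v}" by (rule mt_sub) (use vPM in auto)
  note s = sa sb
  have d: "\<forall>w\<in>{0..<v}. card {E\<in>mt 0 {..<P}. w \<in> E} \<le> 2" "\<forall>w\<in>{0..<v}. card {E\<in>mt 0 {P..<P+M}. w \<in> E} \<le> 2"
    using mt_deg le_trans by (auto intro: le_trans[OF mt_deg])
  note a = iso_card[OF i' f] iso_fin[OF i' f]
  have "\<forall>q. card {S\<in>Dp. q \<in> S} \<le> 2 \<and> card {S\<in>Dm. q \<in> S} \<le> 2"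
    using iso_deg[OF i' f s d] by blast
  then show ?thesis using a c vPM by simp
qed

lemma H1_b:
  assumes "H1_iso V Dp Dm v e"
  shows "finite Dp \<and> finite Dm \<and> (\<forall>q. card {S\<in>Dp. q \<in> S} \<le> 2 \<and> card {S\<in>Dm. q \<in> S} \<le> 2)
     \<and> 2 * (card Dp + card Dm) \<le> v + 2"
proof -
  define p where "p = (int v - 6 + 2*e) div 4"
  define m where "m = (int v - 2 - 2*e) div 4"
  have h: "4*p = int v - 6 + 2*e" "4*m = int v - 2 - 2*e" "p \<ge> 0" "m \<ge> 0"
    and i: "iso_model V Dp Dm {0..<v} ({{0,1},{0,2}} \<union> match_plus 4 (nat p))
        ({{0,3}} \<union> match_minus 4 (nat p) (nat m))"
    using assms unfolding H1_iso_def Let_def p_def m_def by auto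
  define P where "P = nat p"
  define M where "M = nat m"
  have "int v = 2*(p+m) + 4" using h by presburger
  then have "int v = int (2*(P+M) + 4)" unfolding P_def M_def using h(3,4) by simp
  then have vPM: "v = 2*(P+M) + 4" by simp
  let ?Pl = "{{0,1},{0,2}} \<union> mt 4 {..<P}"
  let ?Mi = "{{0,3}} \<union> mt 4 {P..<P+M}"
  have i': "iso_model V Dp Dm {0..<v} ?Pl ?Mi"
    using i unfolding P_def M_def match_plus_eq match_minus_eq .
  have f: "finite ?Pl" "finite ?Mi" by (simp_all add: mt_fin)
  have c: "card ?Pl \<le> 2 + P" "card ?Mi \<le> 1 + M"
  proof -
    have "card ?Pl \<le> card {{0::nat,1},{0,2}} + card (mt 4 {..<P})" by (rule card_Un_le)
    moreover have "card {{0::nat,1},{0,2}} \<le> 2" using card_ins_le[of "{{0::nat,2}}" "{0,1}"] by simp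
    ultimately show "card ?Pl \<le> 2 + P" using mt_card[of "{..<P}" 4] by simp
    have "card ?Mi \<le> card {{0::nat,3}} + card (mt 4 {P..<P+M})" by (rule card_Un_le)
    then show "card ?Mi \<le> 1 + M" using mt_card[of "{P..<P+M}" 4] by simp
  qed
  have s1a: "\<forall>E\<in>mt 4 {..<P}. E \<subseteq> {0..<v}" by (rule mt_sub) (use vPM in auto)
  have s1b: "\<forall>E\<in>mt 4 {P..<P+M}. E \<subseteq> {0..<v}" by (rule mt_sub) (use vPM in auto)
  note s1 = s1a s1b
  have s: "\<forall>E\<in>?Pl. E \<subseteq> {0..<v}" "\<forall>E\<in>?Mi. E \<subseteq> {0..<v}"
    using s1 vPM by auto
  have d: "\<forall>w\<in>{0..<v}. card {E\<in>?Pl. w \<in> E} \<le> 2" "\<forall>w\<in>{0..<v}. card {E\<in>?Mi. w \<in> E} \<le> 2"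
  proof -
    have "card {{0::nat,1},{0,2}} \<le> 2" using card_ins_le[of "{{0::nat,2}}" "{0,1}"] by simp
    then show "\<forall>w\<in>{0..<v}. card {E\<in>?Pl. w \<in> E} \<le> 2"
      using star_deg[of "{{0::nat,1},{0,2}}" "{..<P}"] by auto
    show "\<forall>w\<in>{0..<v}. card {E\<in>?Mi. w \<in> E} \<le> 2"
      using star_deg[of "{{0::nat,3}}" "{P..<P+M}"] by auto
  qed
  note a = iso_card[OF i' f] iso_fin[OF i' f]
  have "\<forall>q. card {S\<in>Dp. q \<in> S} \<le> 2 \<and> card {S\<in>Dm. q \<in> S} \<le> 2"
    using iso_deg[OF i' f s d] by blast
  then show ?thesis using a c vPM by simp
qed

lemma H2_b:
  assumes "H2_iso V Dp Dm v e"
  shows "finite Dp \<and> finite Dm \<and> (\<forall>q. card {S\<in>Dp. q \<in> S} \<le> 2 \<and> card {S\<in>Dm. q \<in> S} \<le> 2)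
     \<and> 2 * (card Dp + card Dm) \<le> v + 2"
proof -
  define p where "p = (int v - 2 + 2*e) div 4"
  define m where "m = (int v - 6 - 2*e) div 4"
  have h: "4*p = int v - 2 + 2*e" "4*m = int v - 6 - 2*e" "p \<ge> 0" "m \<ge> 0"
    and i: "iso_model V Dp Dm {0..<v} ({{0,1}} \<union> match_plus 4 (nat p))
        ({{0,2},{0,3}} \<union> match_minus 4 (nat p) (nat m))"
    using assms unfolding H2_iso_def Let_def p_def m_def by auto
  define P where "P = nat p"
  define M where "M = nat m"
  have "int v = 2*(p+m) + 4" using h by presburger
  then have "int v = int (2*(P+M) + 4)" unfolding P_def M_def using h(3,4) by simp
  then have vPM: "v = 2*(P+M) + 4" by simp
  let ?Pl = "{{0,1}} \<union> mt 4 {..<P}"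
  let ?Mi = "{{0,2},{0,3}} \<union> mt 4 {P..<P+M}"
  have i': "iso_model V Dp Dm {0..<v} ?Pl ?Mi"
    using i unfolding P_def M_def match_plus_eq match_minus_eq .
  have f: "finite ?Pl" "finite ?Mi" by (simp_all add: mt_fin)
  have c: "card ?Pl \<le> 1 + P" "card ?Mi \<le> 2 + M"
  proof -
    have "card ?Mi \<le> card {{0::nat,2},{0,3}} + card (mt 4 {P..<P+M})" by (rule card_Un_le)
    moreover have "card {{0::nat,2},{0,3}} \<le> 2" using card_ins_le[of "{{0::nat,3}}" "{0,2}"] by simp
    ultimately show "card ?Mi \<le> 2 + M" using mt_card[of "{P..<P+M}" 4] by simp
    have "card ?Pl \<le> card {{0::nat,1}} + card (mt 4 {..<P})" by (rule card_Un_le)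
    then show "card ?Pl \<le> 1 + P" using mt_card[of "{..<P}" 4] by simp
  qed
  have s1a: "\<forall>E\<in>mt 4 {..<P}. E \<subseteq> {0..<v}" by (rule mt_sub) (use vPM in auto)
  have s1b: "\<forall>E\<in>mt 4 {P..<P+M}. E \<subseteq> {0..<v}" by (rule mt_sub) (use vPM in auto)
  note s1 = s1a s1b
  have s: "\<forall>E\<in>?Pl. E \<subseteq> {0..<v}" "\<forall>E\<in>?Mi. E \<subseteq> {0..<v}"
    using s1 vPM by auto
  have d: "\<forall>w\<in>{0..<v}. card {E\<in>?Pl. w \<in> E} \<le> 2" "\<forall>w\<in>{0..<v}. card {E\<in>?Mi. w \<in> E} \<le> 2"
  proof -
    have "card {{0::nat,2},{0,3}} \<le> 2" using card_ins_le[of "{{0::nat,3}}" "{0,2}"] by simp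
    then show "\<forall>w\<in>{0..<v}. card {E\<in>?Mi. w \<in> E} \<le> 2"
      using star_deg[of "{{0::nat,2},{0,3}}" "{P..<P+M}"] by auto
    show "\<forall>w\<in>{0..<v}. card {E\<in>?Pl. w \<in> E} \<le> 2"
      using star_deg[of "{{0::nat,1}}" "{..<P}"] by auto
  qed
  note a = iso_card[OF i' f] iso_fin[OF i' f]
  have "\<forall>q. card {S\<in>Dp. q \<in> S} \<le> 2 \<and> card {S\<in>Dm. q \<in> S} \<le> 2"
    using iso_deg[OF i' f s d] by blast
  then show ?thesis using a c vPM by simp
qed



lemma ksub2_elem: "S \<in> ksub V 2 \<Longrightarrow> \<exists>x y. S = {x,y} \<and> x \<noteq> y \<and> x \<in> V \<and> y \<in> V"
  unfolding ksub_def by (auto simp: card_2_iff)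

lemma defect_fin: "finite V \<Longrightarrow> finite (defect_plus V F l) \<and> finite (defect_minus V F l)"
proof -
  assume fin: "finite V"
  have "defect_plus V F l \<subseteq> Pow V" "defect_minus V F l \<subseteq> Pow V"
    unfolding defect_plus_def defect_minus_def by auto
  then show ?thesis using fin finite_subset by blast
qed

lemma in_dp: "x \<in> V \<Longrightarrow> y \<in> V \<Longrightarrow> x \<noteq> y \<Longrightarrow> int (lam F {x,y}) = l + 1 \<Longrightarrow> {x,y} \<in> defect_plus V F l"
  unfolding defect_plus_def by blast

lemma in_dm: "x \<in> V \<Longrightarrow> y \<in> V \<Longrightarrow> x \<noteq> y \<Longrightarrow> int (lam F {x,y}) = l - 1 \<Longrightarrow> {x,y} \<in> defect_minus V F l"
  unfolding defect_minus_def by blast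

lemma Fside_rng:
  assumes rng: "\<forall>x\<in>V. \<forall>y\<in>V. x \<noteq> y \<longrightarrow> int (lam F {x,y}) \<in> {l-1, l, l+1}"
  shows "\<forall>S\<in>ksub V 2. int (lam F S) - l \<in> {-1,0,1}"
proof
  fix S assume "S \<in> ksub V 2"
  then obtain x y where "S = {x,y}" "x \<noteq> y" "x \<in> V" "y \<in> V" using ksub2_elem by blast
  then have "int (lam F {x,y}) \<in> {l-1, l, l+1}" using rng by blast
  then show "int (lam F S) - l \<in> {-1,0,1}" using \<open>S = {x,y}\<close> by auto
qed

lemma Fside_sq:
  assumes fin: "finite V" and r: "\<forall>S\<in>ksub V 2. int (lam F S) - l \<in> {-1,0,1}"
  shows "(\<Sum>S\<in>ksub V 2. (int (lam F S) - l)^2) \<le> int (card (defect_plus V F l) + card (defect_minus V F l))"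
proof -
  let ?D = "\<lambda>S. int (lam F S) - l"
  let ?L = "ksub V 2"
  have finL: "finite ?L" by (rule finite_ksub[OF fin])
  have "(\<Sum>S\<in>?L. (?D S)^2) = (\<Sum>S\<in>?L. if ?D S \<noteq> 0 then 1 else 0)"
  proof (rule sum.cong[OF refl])
    fix S assume "S \<in> ?L" then have "?D S \<in> {-1,0,1}" using r by blast
    then show "(?D S)^2 = (if ?D S \<noteq> 0 then 1 else 0)" by auto
  qed
  also have "\<dots> = int (card {S\<in>?L. ?D S \<noteq> 0})"
    using card_filter_sum[OF finL, of "\<lambda>S. ?D S \<noteq> 0"] by (simp add: of_nat_sum) (rule sum.cong; simp)
  also have "card {S\<in>?L. ?D S \<noteq> 0} \<le> card (defect_plus V F l \<union> defect_minus V F l)"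
  proof (rule card_mono)
    show "finite (defect_plus V F l \<union> defect_minus V F l)" using defect_fin[OF fin] by simp
    show "{S\<in>?L. ?D S \<noteq> 0} \<subseteq> defect_plus V F l \<union> defect_minus V F l"
    proof
      fix S assume S: "S \<in> {S\<in>?L. ?D S \<noteq> 0}"
      then obtain x y where xy: "S = {x,y}" "x \<noteq> y" "x \<in> V" "y \<in> V" using ksub2_elem by blast
      have "?D S \<in> {-1,0,1}" using S r by blast
      then have "?D S = 1 \<or> ?D S = -1" using S by auto
      then have "int (lam F {x,y}) = l + 1 \<or> int (lam F {x,y}) = l - 1" using xy(1) by auto
      then show "S \<in> defect_plus V F l \<union> defect_minus V F l"
        using in_dp[OF xy(3,4,2)] in_dm[OF xy(3,4,2)] xy(1) by blast
    qed
  qed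
  also have "\<dots> \<le> card (defect_plus V F l) + card (defect_minus V F l)" by (rule card_Un_le)
  finally show ?thesis by simp
qed

lemma Fside_vert:
  assumes fin: "finite V" and r: "\<forall>S\<in>ksub V 2. int (lam F S) - l \<in> {-1,0,1}"
  shows "(\<Sum>S\<in>{S\<in>ksub V 2. p \<in> S}. int (lam F S) - l) \<le> int (card {S\<in>defect_plus V F l. p \<in> S})"
    and "- int (card {S\<in>defect_minus V F l. p \<in> S}) \<le> (\<Sum>S\<in>{S\<in>ksub V 2. p \<in> S}. int (lam F S) - l)"
proof -
  let ?D = "\<lambda>S. int (lam F S) - l"
  let ?Lp = "{S\<in>ksub V 2. p \<in> S}"
  have finL: "finite ?Lp" using finite_ksub[OF fin] by simp
  have "(\<Sum>S\<in>?Lp. ?D S) \<le> (\<Sum>S\<in>?Lp. if ?D S = 1 then 1 else 0)"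
  proof (rule sum_mono)
    fix S assume "S \<in> ?Lp" then have "?D S \<in> {-1,0,1}" using r by blast
    then show "?D S \<le> (if ?D S = 1 then 1 else 0)" by auto
  qed
  also have "\<dots> = int (card {S\<in>?Lp. ?D S = 1})"
    using card_filter_sum[OF finL, of "\<lambda>S. ?D S = 1"] by (simp add: of_nat_sum) (rule sum.cong; simp)
  also have "card {S\<in>?Lp. ?D S = 1} \<le> card {S\<in>defect_plus V F l. p \<in> S}"
  proof (rule card_mono)
    show "finite {S\<in>defect_plus V F l. p \<in> S}" using defect_fin[OF fin] by simp
    show "{S\<in>?Lp. ?D S = 1} \<subseteq> {S\<in>defect_plus V F l. p \<in> S}"
    proof
      fix S assume S: "S \<in> {S\<in>?Lp. ?D S = 1}"
      then obtain x y where xy: "S = {x,y}" "x \<noteq> y" "x \<in> V" "y \<in> V" using ksub2_elem by blast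
      then have "int (lam F {x,y}) = l + 1" using S by auto
      then show "S \<in> {S\<in>defect_plus V F l. p \<in> S}"
        using in_dp[OF xy(3,4,2)] xy(1) S by blast
    qed
  qed
  finally show "(\<Sum>S\<in>?Lp. ?D S) \<le> int (card {S\<in>defect_plus V F l. p \<in> S})" by simp
  have "(\<Sum>S\<in>?Lp. - (if ?D S = -1 then 1 else 0)) \<le> (\<Sum>S\<in>?Lp. ?D S)"
  proof (rule sum_mono)
    fix S assume "S \<in> ?Lp" then have "?D S \<in> {-1,0,1}" using r by blast
    then show "- (if ?D S = -1 then 1 else 0) \<le> ?D S" by auto
  qed
  moreover have "(\<Sum>S\<in>?Lp. - (if ?D S = -1 then 1 else 0)) = - int (card {S\<in>?Lp. ?D S = -1})"
    using card_filter_sum[OF finL, of "\<lambda>S. ?D S = -1"] by (simp add: of_nat_sum sum_negf) (rule sum.cong; simp)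
  moreover have "card {S\<in>?Lp. ?D S = -1} \<le> card {S\<in>defect_minus V F l. p \<in> S}"
  proof (rule card_mono)
    show "finite {S\<in>defect_minus V F l. p \<in> S}" using defect_fin[OF fin] by simp
    show "{S\<in>?Lp. ?D S = -1} \<subseteq> {S\<in>defect_minus V F l. p \<in> S}"
    proof
      fix S assume S: "S \<in> {S\<in>?Lp. ?D S = -1}"
      then obtain x y where xy: "S = {x,y}" "x \<noteq> y" "x \<in> V" "y \<in> V" using ksub2_elem by blast
      then have "int (lam F {x,y}) = l - 1" using S by auto
      then show "S \<in> {S\<in>defect_minus V F l. p \<in> S}"
        using in_dm[OF xy(3,4,2)] xy(1) S by blast
    qed
  qed
  ultimately show "- int (card {S\<in>defect_minus V F l. p \<in> S}) \<le> (\<Sum>S\<in>?Lp. ?D S)" by linarith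
qed



lemma int_sumsq: "(\<Sum>S\<in>A. int (f S)^2) = int (\<Sum>S\<in>A. (f S)^2)"
  by (simp add: of_nat_sum)

lemma k0:
  assumes "length F' = length F" "finite V"
  shows "(\<Sum>S\<in>ksub V 0. (lam F S)^2) \<le> (\<Sum>S\<in>ksub V 0. (lam F' S)^2)"
proof -
  have "ksub V 0 = {{}}" unfolding ksub_def using assms(2) by (auto simp: card_eq_0_iff intro: finite_subset)
  then show ?thesis using assms by (simp add: lam_def)
qed

lemma k_bal:
  assumes "TS V F" "TS V F'" "length F' = length F"
    and c: "\<forall>S\<in>ksub V k. int (lam F S) = c \<or> int (lam F S) = c + 1"
  shows "(\<Sum>S\<in>ksub V k. (lam F S)^2) \<le> (\<Sum>S\<in>ksub V k. (lam F' S)^2)"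
proof -
  have fin: "finite V" using assms(1) TS_def by auto
  have "(\<Sum>S\<in>ksub V k. int (lam F S)) = (\<Sum>S\<in>ksub V k. int (lam F' S))"
    using lam_sumS[OF assms(1), of k] lam_sumS[OF assms(2), of k] assms(3)
    by (simp add: of_nat_sum[symmetric])
  then have "(\<Sum>S\<in>ksub V k. (int (lam F S))^2) \<le> (\<Sum>S\<in>ksub V k. (int (lam F' S))^2)"
    using minsq[OF finite_ksub[OF fin, of k], of "\<lambda>S. int (lam F S)" "\<lambda>S. int (lam F' S)" c] c by blast
  then show ?thesis by (simp only: int_sumsq of_nat_le_iff)
qed

lemma k2:
  assumes "TS V F" "TS V F'" "length F' = length F"
    and le: "(\<Sum>S\<in>ksub V 2. (int (lam F S) - l)^2) \<le> (\<Sum>S\<in>ksub V 2. (int (lam F' S) - l)^2)"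
  shows "(\<Sum>S\<in>ksub V 2. (lam F S)^2) \<le> (\<Sum>S\<in>ksub V 2. (lam F' S)^2)"
proof -
  have fin: "finite V" using assms(1) TS_def by auto
  let ?L = "ksub V 2"
  have s: "(\<Sum>S\<in>?L. int (lam F S)) = (\<Sum>S\<in>?L. int (lam F' S))"
    using lam_sumS[OF assms(1), of 2] lam_sumS[OF assms(2), of 2] assms(3)
    by (simp add: of_nat_sum[symmetric])
  have id: "\<And>G. (\<Sum>S\<in>?L. (int (lam G S))^2) = (\<Sum>S\<in>?L. (int (lam G S) - l)^2) + 2 * l * (\<Sum>S\<in>?L. int (lam G S)) - int (card ?L) * l^2"
  proof -
    fix G :: "'a set list"
    have "\<And>S. (int (lam G S))^2 = (int (lam G S) - l)^2 + 2 * l * int (lam G S) - l^2"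
      by (simp add: power2_eq_square algebra_simps)
    then show "(\<Sum>S\<in>?L. (int (lam G S))^2) = (\<Sum>S\<in>?L. (int (lam G S) - l)^2) + 2 * l * (\<Sum>S\<in>?L. int (lam G S)) - int (card ?L) * l^2"
      by (simp add: sum.distrib sum_subtractf sum_distrib_left)
  qed
  have "(\<Sum>S\<in>?L. (int (lam F S))^2) \<le> (\<Sum>S\<in>?L. (int (lam F' S))^2)"
  proof -
    have "2 * l * (\<Sum>S\<in>?L. int (lam F S)) = 2 * l * (\<Sum>S\<in>?L. int (lam F' S))" using s by simp
    then show ?thesis using id[of F] id[of F'] le by linarith
  qed
  then show ?thesis by (simp only: int_sumsq of_nat_le_iff)
qed

lemma k1:
  assumes "TS V F" "TS V F'" "length F' = length F"
    and a: "\<forall>p\<in>V. a \<le> 2 * int (lam F {p}) \<and> 2 * int (lam F {p}) \<le> a + 3"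
  shows "(\<Sum>S\<in>ksub V 1. (lam F S)^2) \<le> (\<Sum>S\<in>ksub V 1. (lam F' S)^2)"
proof (rule k_bal[OF assms(1-3)])
  show "\<forall>S\<in>ksub V 1. int (lam F S) = (a + 1) div 2 \<or> int (lam F S) = (a + 1) div 2 + 1"
  proof
    fix S assume "S \<in> ksub V 1"
    then obtain p where p: "S = {p}" "p \<in> V" unfolding ksub_def by (auto simp: card_1_singleton_iff)
    then have "a \<le> 2 * int (lam F {p}) \<and> 2 * int (lam F {p}) \<le> a + 3" using a by blast
    then show "int (lam F S) = (a + 1) div 2 \<or> int (lam F S) = (a + 1) div 2 + 1"
      using p(1) by presburger
  qed
qed

lemma k3:
  assumes "TS V F" "TS V F'" "length F' = length F" "balanced 3 V F"
  shows "(\<Sum>S\<in>ksub V 3. (lam F S)^2) \<le> (\<Sum>S\<in>ksub V 3. (lam F' S)^2)"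
proof -
  have fin: "finite V" using assms(1) TS_def by auto
  have "\<forall>S\<in>ksub V 3. \<forall>T\<in>ksub V 3. \<bar>int (lam F S) - int (lam F T)\<bar> \<le> 1"
    using assms(4) unfolding balanced_def ksub_def by blast
  then obtain c where "\<forall>S\<in>ksub V 3. int (lam F S) = c \<or> int (lam F S) = c + 1"
    using bal_c[OF finite_ksub[OF fin, of 3], of "\<lambda>S. int (lam F S)"] by blast
  then show ?thesis by (rule k_bal[OF assms(1-3)])
qed

lemma final_assembly:
  assumes "TS V F" "TS V F'" "length F' = length F" "x \<ge> 1"
    and k: "\<forall>k\<le>3. (\<Sum>S\<in>ksub V k. (lam F S)^2) \<le> (\<Sum>S\<in>ksub V k. (lam F' S)^2)"
  shows "Ppoly F x \<le> Ppoly F' x"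
proof -
  have "Qp F x \<le> Qp F' x"
    unfolding Qp_expand[OF assms(1)] Qp_expand[OF assms(2)]
  proof (rule sum_mono)
    fix k assume "k \<in> {..3::nat}"
    then have "(\<Sum>S\<in>ksub V k. (lam F S)^2) \<le> (\<Sum>S\<in>ksub V k. (lam F' S)^2)"
      using k by simp
    then have "real (\<Sum>S\<in>ksub V k. (lam F S)^2) \<le> real (\<Sum>S\<in>ksub V k. (lam F' S)^2)"
      by (rule of_nat_mono)
    moreover have "0 \<le> (x - 1) ^ k" using assms(4) by simp
    ultimately show "(x - 1) ^ k * real (\<Sum>S\<in>ksub V k. (lam F S)^2) \<le> (x - 1) ^ k * real (\<Sum>S\<in>ksub V k. (lam F' S)^2)"
      by (rule mult_left_mono)
  qed
  then show ?thesis using Ppoly_Qp[OF assms(1)] Ppoly_Qp[OF assms(2)] assms(3) by simp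
qed



theorem theorem2p3:
  fixes V :: "'a set" and F F' :: "'a set list" and x :: real
  assumes "C1_pair (card V) (length F) \<or> C2_pair (card V) (length F)"
    and "NWBTS V F"
    and "TS V F'" and "length F' = length F"
    and "x \<ge> 1"
  shows "Ppoly F x \<le> Ppoly F' x"
proof -
  have TS: "TS V F" and bal: "balanced 3 V F" and nb: "nearly_2_balanced V F"
    using assms(2) unfolding NWBTS_def by auto
  have TS': "TS V F'" by (rule assms(3))
  have fin: "finite V" and v3: "card V \<ge> 3" using TS unfolding TS_def by auto
  define v where "v = card V"
  define b where "b = length F"
  obtain l e where ap: "assoc_pair v b l e"
    and rng: "\<forall>x\<in>V. \<forall>y\<in>V. x \<noteq> y \<longrightarrow> int (lam F {x, y}) \<in> {l - 1, l, l + 1}"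
    and br: "(C1 v b l \<and> G_iso V (defect_plus V F l) (defect_minus V F l) e) \<or>
         (C2 v b l \<and>
           (if e mod 2 = int (v div 2) mod 2
            then H0_iso V (defect_plus V F l) (defect_minus V F l) v e
            else H1_iso V (defect_plus V F l) (defect_minus V F l) v e \<or>
                 H2_iso V (defect_plus V F l) (defect_minus V F l) v e))"
    using nb unfolding nearly_2_balanced_def Let_def v_def b_def by blast
  define Dp where "Dp = defect_plus V F l"
  define Dm where "Dm = defect_minus V F l"
  define X where "X = (int v - 1) * l"
  let ?L = "ksub V 2"
  have v3': "v \<ge> 3" using v3 v_def by simp
  have vs: "(\<Sum>S\<in>{S\<in>ksub V 2. p \<in> S}. int (lam G S) - l) = 2 * int (lam G {p}) - X"
    if G: "TS V G" and p: "p \<in> V" for G p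
  proof -
    have "(\<Sum>S\<in>{S\<in>ksub V 2. p \<in> S}. int (lam G S) - l)
        = int (\<Sum>S\<in>{S\<in>ksub V 2. p \<in> S}. lam G S) - int (card {S\<in>ksub V 2. p \<in> S}) * l"
      by (simp add: sum_subtractf of_nat_sum)
    also have "\<dots> = 2 * int (lam G {p}) - (int v - 1) * l"
      using vertex_id[OF G p] card_Lp[OF fin p] v3' unfolding v_def by simp
    finally show ?thesis unfolding X_def .
  qed
  have sumD': "(\<Sum>S\<in>?L. int (lam F' S) - l) = e"
  proof -
    have "(\<Sum>S\<in>?L. int (lam F' S) - l) = int (\<Sum>S\<in>?L. lam F' S) - int (card ?L) * l"
      by (simp add: sum_subtractf of_nat_sum)
    also have "\<dots> = 3 * int b - int (v choose 2) * l"
      using lam_sumS[OF TS', of 2] card_ksub[OF fin, of 2] assms(4) unfolding v_def b_def by (simp add: choose_two)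
    also have "\<dots> = e" using ap unfolding assoc_pair_def by (simp add: algebra_simps)
    finally show ?thesis .
  qed
  have rD: "\<forall>S\<in>ksub V 2. int (lam F S) - l \<in> {-1,0,1}" by (rule Fside_rng[OF rng])
  have sq: "(\<Sum>S\<in>?L. (int (lam F S) - l)^2) \<le> int (card Dp + card Dm)"
    unfolding Dp_def Dm_def by (rule Fside_sq[OF fin rD])
  have vb: "2 * int (lam F {p}) - X \<le> int (card {S\<in>Dp. p \<in> S}) \<and>
            - int (card {S\<in>Dm. p \<in> S}) \<le> 2 * int (lam F {p}) - X" if p: "p \<in> V" for p
    using Fside_vert[OF fin rD, of p] vs[OF TS p] unfolding Dp_def Dm_def by simp
  have par: "even ((\<Sum>S\<in>?L. (int (lam F' S) - l)^2) - e)"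
    using sq_parity[OF finite_ksub[OF fin, of 2], of "\<lambda>S. int (lam F' S) - l"] sumD' by simp
  have K: "(\<Sum>S\<in>?L. (int (lam F S) - l)^2) \<le> (\<Sum>S\<in>?L. (int (lam F' S) - l)^2) \<and>
        (\<exists>a. \<forall>p\<in>V. a \<le> 2 * int (lam F {p}) \<and> 2 * int (lam F {p}) \<le> a + 3)"
    using br
  proof (elim disjE conjE)
    assume c1: "C1 v b l" and g: "G_iso V (defect_plus V F l) (defect_minus V F l) e"
    have "v mod 3 = 2" "v mod 6 = 2 \<longrightarrow> l mod 6 \<in> {2, 4}" using c1 unfolding C1_def by auto
    then have "even (int v - 1) \<or> even l" using v3' by auto presburger+
    then have Xe: "even X" unfolding X_def by auto
    have gb: "finite Dp \<and> finite Dm \<and>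
      ((e = 1 \<and> card Dp \<le> 2 \<and> card Dm \<le> 1) \<or> (e = -1 \<and> card Dp \<le> 1 \<and> card Dm \<le> 2) \<or>
       (e = 2 \<and> card Dp \<le> 3 \<and> card Dm \<le> 1) \<or> (e = -2 \<and> card Dp \<le> 1 \<and> card Dm \<le> 3))"
      using G_bounds[OF g] unfolding Dp_def Dm_def .
    have dp: "card {S\<in>Dp. p \<in> S} \<le> card Dp" "card {S\<in>Dm. p \<in> S} \<le> card Dm" for p
      using gb by (auto intro: card_mono)
    have ev': "\<forall>p\<in>V. even (\<Sum>S\<in>{S\<in>ksub V 2. p \<in> S}. int (lam F' S) - l)"
      using vs[OF TS'] Xe by simp
    have enz: "e \<noteq> 0" using gb by auto
    have Q3: "3 \<le> (\<Sum>S\<in>?L. (int (lam F' S) - l)^2)"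
      using LB_even[OF fin ev'] sumD' enz by simp
    show ?thesis
    proof
      show "(\<Sum>S\<in>?L. (int (lam F S) - l)^2) \<le> (\<Sum>S\<in>?L. (int (lam F' S) - l)^2)"
        using sq gb Q3 par by auto presburger+
      show "\<exists>a. \<forall>p\<in>V. a \<le> 2 * int (lam F {p}) \<and> 2 * int (lam F {p}) \<le> a + 3"
      proof (intro exI ballI)
        fix p assume p: "p \<in> V"
        have "2 * int (lam F {p}) - X \<le> int (card Dp)" "- int (card Dm) \<le> 2 * int (lam F {p}) - X"
          using vb[OF p] dp[of p] by linarith+
        then show "(if e > 0 then X - 1 else X - 2) \<le> 2 * int (lam F {p}) \<and>
             2 * int (lam F {p}) \<le> (if e > 0 then X - 1 else X - 2) + 3"
          using gb Xe by auto presburger+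
      qed
    qed
  next
    assume c2: "C2 v b l" and h: "if e mod 2 = int (v div 2) mod 2
            then H0_iso V (defect_plus V F l) (defect_minus V F l) v e
            else H1_iso V (defect_plus V F l) (defect_minus V F l) v e \<or>
                 H2_iso V (defect_plus V F l) (defect_minus V F l) v e"
    have "even v" "odd l" using c2 unfolding C2_def by auto
    then have Xo: "odd X" unfolding X_def using v3' by auto
    have hb: "finite Dp \<and> finite Dm \<and> (\<forall>q. card {S\<in>Dp. q \<in> S} \<le> 2 \<and> card {S\<in>Dm. q \<in> S} \<le> 2)
      \<and> 2 * (card Dp + card Dm) \<le> (if e mod 2 = int (v div 2) mod 2 then v else v + 2)"
    proof (cases "e mod 2 = int (v div 2) mod 2")
      case True then show ?thesis using h H0_b unfolding Dp_def Dm_def by simp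
    next
      case False
      then have "H1_iso V Dp Dm v e \<or> H2_iso V Dp Dm v e" using h unfolding Dp_def Dm_def by simp
      then show ?thesis
      proof
        assume "H1_iso V Dp Dm v e" from H1_b[OF this] show ?thesis using False by simp
      next
        assume "H2_iso V Dp Dm v e" from H2_b[OF this] show ?thesis using False by simp
      qed
    qed
    have od': "\<forall>p\<in>V. odd (\<Sum>S\<in>{S\<in>ksub V 2. p \<in> S}. int (lam F' S) - l)"
      using vs[OF TS'] Xo by simp
    have Qv: "int v \<le> 2 * (\<Sum>S\<in>?L. (int (lam F' S) - l)^2)"
      using LB_odd[OF fin od'] unfolding v_def by simp
    have ve: "int v = 2 * int (v div 2)" using \<open>even v\<close> by (metis dvd_mult_div_cancel of_nat_mult of_nat_numeral)
    show ?thesis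
    proof
      show "(\<Sum>S\<in>?L. (int (lam F S) - l)^2) \<le> (\<Sum>S\<in>?L. (int (lam F' S) - l)^2)"
      proof (cases "e mod 2 = int (v div 2) mod 2")
        case True
        then have "2 * int (card Dp + card Dm) \<le> int v" using hb by simp
        then show ?thesis using sq Qv by (smt (verit))
      next
        case False
        then have "2 * int (card Dp + card Dm) \<le> int v + 2" using hb by simp
        moreover have "int v + 2 \<le> 2 * (\<Sum>S\<in>?L. (int (lam F' S) - l)^2)"
          using Qv par False ve by presburger
        ultimately show ?thesis using sq by (smt (verit))
      qed
      show "\<exists>a. \<forall>p\<in>V. a \<le> 2 * int (lam F {p}) \<and> 2 * int (lam F {p}) \<le> a + 3"
      proof (intro exI ballI)
        fix p assume p: "p \<in> V"
        have "2 * int (lam F {p}) - X \<le> 2" "- 2 \<le> 2 * int (lam F {p}) - X"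
          using vb[OF p] hb by (metis (no_types) of_nat_le_iff of_nat_numeral order.trans neg_le_iff_le)+
        then show "X - 1 \<le> 2 * int (lam F {p}) \<and> 2 * int (lam F {p}) \<le> X - 1 + 3"
          using Xo by presburger
      qed
    qed
  qed
  have kk: "\<forall>k\<le>3. (\<Sum>S\<in>ksub V k. (lam F S)^2) \<le> (\<Sum>S\<in>ksub V k. (lam F' S)^2)"
  proof (intro allI impI)
    fix k :: nat assume "k \<le> 3"
    then have "k = 0 \<or> k = 1 \<or> k = 2 \<or> k = 3" by auto
    then show "(\<Sum>S\<in>ksub V k. (lam F S)^2) \<le> (\<Sum>S\<in>ksub V k. (lam F' S)^2)"
    proof (elim disjE)
      assume "k = 0" then show ?thesis using k0[OF assms(4) fin] by simp
    next
      assume "k = 1"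
      from K obtain a where "\<forall>p\<in>V. a \<le> 2 * int (lam F {p}) \<and> 2 * int (lam F {p}) \<le> a + 3" by blast
      then show ?thesis using k1[OF TS TS' assms(4)] \<open>k = 1\<close> by blast
    next
      assume "k = 2" then show ?thesis using k2[OF TS TS' assms(4)] K by blast
    next
      assume "k = 3" then show ?thesis using k3[OF TS TS' assms(4) bal] by simp
    qed
  qed
  show ?thesis by (rule final_assembly[OF TS TS' assms(4) assms(5) kk])
qed


end
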